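(* Let $\beta\in(1,3/2)$ and let $\mu$ be an arbitrary Borel probability measure on $S_\beta$. Then $$(m_1\otimes m_2\otimes\mu)\circ K_\beta^{-1}=(m_1\otimes m_2\otimes\mu)\circ R_\beta^{-1}=m_1\otimes m_2\otimes\nu,$$ where $\nu=ps\,\mu\circ\tau_1^{-1}+pt\,\mu\circ\tau_2^{-1}+p(1-s-t)\,\mu\circ\tau_3^{-1}+(1-p)s\,\mu\circ\tau_4^{-1}+(1-p)t\,\mu\circ\tau_5^{-1}+(1-p)(1-s-t)\,\mu\circ\tau_6^{-1}$.
   Context: $\vec q_0=(0,0)$, $\vec q_1=(1,0)$, $\vec q_2=(0,1)$; $S_\beta$ is the attractor of the IFS $f_{\vec q_i}(\vec z)=(\vec z+\vec q_i)/\beta$, here the closed triangle with vertices $(0,0)$, $(\frac1{\beta-1},0)$, $(0,\frac1{\beta-1})$. Subsets of $S_\beta$: $E_0=[0,\frac1\beta)\times[0,\frac1\beta)$; $E_1=\{0\le y<\frac1\beta,\ \frac{1}{\beta(\beta-1)}<x+y\le\frac{1}{\beta-1}\}$; $E_2=\{0\le x<\frac1\beta,\ \frac{1}{\beta(\beta-1)}<x+y\le\frac{1}{\beta-1}\}$; $C_{01}=\{x\ge\frac1\beta,\ 0\le y<\frac1\beta,\ x+y\le\frac{1}{\beta(\beta-1)}\}$; $C_{12}=\{x\ge\frac1\beta,\ y\ge\frac1\beta,\ \frac{1}{\beta(\beta-1)}<x+y\le\frac{1}{\beta-1}\}$; $C_{02}=\{0\le x<\frac1\beta,\ y\ge\frac1\beta,\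 x+y\le\frac{1}{\beta(\beta-1)}\}$; $C_{012}=\{x\ge\frac1\beta,\ y\ge\frac1\beta,\ x+y\le\frac{1}{\beta(\beta-1)}\}$. Maps $\tau_k(\vec z)=\beta\vec z-a_k(\vec z)$, $k=1,\ldots,6$: $a_k=\vec q_i$ on $E_i$; on $C_{ij}$ ($ij\in\{01,12,02\}$) $a_k=\vec q_i$ for $k\le3$ and $\vec q_j$ for $k\ge4$; on $C_{012}$, $a_k=\vec q_0$ for $k\in\{1,4\}$, $\vec q_1$ for $k\in\{2,5\}$, $\vec q_2$ for $k\in\{3,6\}$. For a measure $\mu$, $\mu\circ\tau_k^{-1}$ denotes $A\mapsto\mu(\tau_k^{-1}(A))$. $\Omega=\{0,1\}^{\mathbb N}$, $\Upsilon=\{0,1,2\}^{\mathbb N}$ with product $\sigma$-algebras and left shifts $\sigma,\sigma'$. Fix $p\in(0,1)$, $s,t>0$, $s+t<1$; $m_1$ is the product measure on $\Omega$ with weights $p$ (symbol $0$) and $1-p$ (symbol $1$); $m_2$ is the product measure on $\Upsilon$ with weights $s,t,1-s-t$ on symbols $0,1,2$. $K_\beta$ on $\Omega\times\Upsilon\times S_\beta$: $K_\beta(\omega,\upsilon,\vec z)=(\omega,\upsilon,\beta\vec z-\vec q_i)$ if $\vec z\in E_i$; $(\sigma\omega,\upsilon,\beta\vec z-\vec q_i)$ if $\omega_1=0$, $\vec z\in C_{ij}$; $(\sigma\omega,\upsilon,\beta\vec z-\vec q_j)$ if $\omega_1=1$, $\vec z\in C_{ij}$; $(\omega,\sigma'\upsilon,\beta\vec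 z-\vec q_i)$ if $\vec z\in C_{012}$, $\upsilon_1=i$. $R_\beta$ on $\Omega\times\Upsilon\times S_\beta$: $R_\beta(\omega,\upsilon,\vec z)=(\sigma\omega,\sigma'\upsilon,\tau_k(\vec z))$ with $k=3\omega_1+\upsilon_1+1$ (i.e. $(\omega_1,\upsilon_1)=(0,0),(0,1),(0,2),(1,0),(1,1),(1,2)$ give $k=1,\ldots,6$). *)

theory Defs
  imports "HOL-Probability.Probability"
begin

definition qv :: "nat \<Rightarrow> real \<times> real" where
  "qv i = (if i = 0 then (0, 0) else if i = 1 then (1, 0) else (0, 1))"

definition Sb :: "real \<Rightarrow> (real \<times> real) set" where
  "Sb \<beta> = {(x, y). 0 \<le> x \<and> 0 \<le> y \<and> x + y \<le> 1 / (\<beta> - 1)}"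

definition E0 :: "real \<Rightarrow> (real \<times> real) set" where
  "E0 \<beta> = Sb \<beta> \<inter> {(x, y). 0 \<le> x \<and> x < 1/\<beta> \<and> 0 \<le> y \<and> y < 1/\<beta>}"

definition E1 :: "real \<Rightarrow> (real \<times> real) set" where
  "E1 \<beta> = Sb \<beta> \<inter> {(x, y). 0 \<le> y \<and> y < 1/\<beta> \<and>
      1/(\<beta>*(\<beta>-1)) < x + y \<and> x + y \<le> 1/(\<beta>-1)}"

definition E2 :: "real \<Rightarrow> (real \<times> real) set" where
  "E2 \<beta> = Sb \<beta> \<inter> {(x, y). 0 \<le> x \<and> x < 1/\<beta> \<and>
      1/(\<beta>*(\<beta>-1)) < x + y \<and> x + y \<le> 1/(\<beta>-1)}"

definition C01 :: "real \<Rightarrow> (real \<times> real) set" where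
  "C01 \<beta> = Sb \<beta> \<inter> {(x, y). x \<ge> 1/\<beta> \<and> 0 \<le> y \<and> y < 1/\<beta> \<and> x + y \<le> 1/(\<beta>*(\<beta>-1))}"

definition C12 :: "real \<Rightarrow> (real \<times> real) set" where
  "C12 \<beta> = Sb \<beta> \<inter> {(x, y). x \<ge> 1/\<beta> \<and> y \<ge> 1/\<beta> \<and>
      1/(\<beta>*(\<beta>-1)) < x + y \<and> x + y \<le> 1/(\<beta>-1)}"

definition C02 :: "real \<Rightarrow> (real \<times> real) set" where
  "C02 \<beta> = Sb \<beta> \<inter> {(x, y). 0 \<le> x \<and> x < 1/\<beta> \<and> y \<ge> 1/\<beta> \<and> x + y \<le> 1/(\<beta>*(\<beta>-1))}"

definition C012 :: "real \<Rightarrow> (real \<times> real) set" where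
  "C012 \<beta> = Sb \<beta> \<inter> {(x, y). x \<ge> 1/\<beta> \<and> y \<ge> 1/\<beta> \<and> x + y \<le> 1/(\<beta>*(\<beta>-1))}"

text \<open>Digit a_k(z); points outside S_beta get the (irrelevant) default q_0.\<close>
definition adig :: "real \<Rightarrow> nat \<Rightarrow> real \<times> real \<Rightarrow> real \<times> real" where
  "adig \<beta> k z =
    (if z \<in> E0 \<beta> then qv 0
     else if z \<in> E1 \<beta> then qv 1
     else if z \<in> E2 \<beta> then qv 2
     else if z \<in> C01 \<beta> then (if k \<le> 3 then qv 0 else qv 1)
     else if z \<in> C12 \<beta> then (if k \<le> 3 then qv 1 else qv 2)
     else if z \<in> C02 \<beta> then (if k \<le> 3 then qv 0 else qv 2)
     else if z \<in> C012 \<beta> then qv ((k - 1) mod 3)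
     else qv 0)"

definition tau :: "real \<Rightarrow> nat \<Rightarrow> real \<times> real \<Rightarrow> real \<times> real" where
  "tau \<beta> k z = \<beta> *\<^sub>R z - adig \<beta> k z"

definition shift :: "(nat \<Rightarrow> nat) \<Rightarrow> nat \<Rightarrow> nat" where
  "shift w = (\<lambda>n. w (Suc n))"

definition m1 :: "real \<Rightarrow> (nat \<Rightarrow> nat) measure" where
  "m1 p = (\<Pi>\<^sub>M n\<in>(UNIV::nat set).
      density (count_space {0, 1::nat}) (\<lambda>i. ennreal (if i = 0 then p else 1 - p)))"

definition m2 :: "real \<Rightarrow> real \<Rightarrow> (nat \<Rightarrow> nat) measure" where
  "m2 s t = (\<Pi>\<^sub>M n\<in>(UNIV::nat set).
      density (count_space {0, 1, 2::nat})
        (\<lambda>i. ennreal (if i = 0 then s else if i = 1 then t else 1 - s - t)))"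

definition Kmap :: "real \<Rightarrow> (nat \<Rightarrow> nat) \<times> (nat \<Rightarrow> nat) \<times> (real \<times> real)
      \<Rightarrow> (nat \<Rightarrow> nat) \<times> (nat \<Rightarrow> nat) \<times> (real \<times> real)" where
  "Kmap \<beta> x = (case x of (\<omega>, \<upsilon>, z) \<Rightarrow>
     (if z \<in> E0 \<beta> then (\<omega>, \<upsilon>, \<beta> *\<^sub>R z - qv 0)
      else if z \<in> E1 \<beta> then (\<omega>, \<upsilon>, \<beta> *\<^sub>R z - qv 1)
      else if z \<in> E2 \<beta> then (\<omega>, \<upsilon>, \<beta> *\<^sub>R z - qv 2)
      else if z \<in> C01 \<beta> then (shift \<omega>, \<upsilon>, \<beta> *\<^sub>R z - (if \<omega> 0 = 0 then qv 0 else qv 1))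
      else if z \<in> C12 \<beta> then (shift \<omega>, \<upsilon>, \<beta> *\<^sub>R z - (if \<omega> 0 = 0 then qv 1 else qv 2))
      else if z \<in> C02 \<beta> then (shift \<omega>, \<upsilon>, \<beta> *\<^sub>R z - (if \<omega> 0 = 0 then qv 0 else qv 2))
      else if z \<in> C012 \<beta> then (\<omega>, shift \<upsilon>, \<beta> *\<^sub>R z - qv (\<upsilon> 0))
      else (\<omega>, \<upsilon>, z)))"

definition Rmap :: "real \<Rightarrow> (nat \<Rightarrow> nat) \<times> (nat \<Rightarrow> nat) \<times> (real \<times> real)
      \<Rightarrow> (nat \<Rightarrow> nat) \<times> (nat \<Rightarrow> nat) \<times> (real \<times> real)" where
  "Rmap \<beta> x = (case x of (\<omega>, \<upsilon>, z) \<Rightarrow>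
     (shift \<omega>, shift \<upsilon>, tau \<beta> (3 * \<omega> 0 + \<upsilon> 0 + 1) z))"

definition wt :: "real \<Rightarrow> real \<Rightarrow> real \<Rightarrow> nat \<Rightarrow> real" where
  "wt p s t k = (if k \<le> 3 then p else 1 - p) *
     (if (k - 1) mod 3 = 0 then s else if (k - 1) mod 3 = 1 then t else 1 - s - t)"

definition nu :: "real \<Rightarrow> real \<Rightarrow> real \<Rightarrow> real \<Rightarrow> (real \<times> real) measure \<Rightarrow> (real \<times> real) measure" where
  "nu \<beta> p s t \<mu> = measure_of (Sb \<beta>) (sets (restrict_space borel (Sb \<beta>)))
     (\<lambda>A. \<Sum>k\<in>{1..6}. ennreal (wt p s t k) *
        emeasure (distr \<mu> (restrict_space borel (Sb \<beta>)) (tau \<beta> k)) A)"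

end

theory Submission
  imports Defs
begin

lemma Sb_iff: "1 < b \<Longrightarrow> (x,y) \<in> Sb b \<longleftrightarrow> 0 \<le> x \<and> 0 \<le> y \<and> (b-1)*(x+y) \<le> 1"
  by (auto simp: Sb_def field_simps)

lemma img_q0: assumes "1 < b" "0 \<le> x" "0 \<le> y" "b*(b-1)*(x+y) \<le> 1"
  shows "b *\<^sub>R (x,y) - qv 0 \<in> Sb b"
proof -
  have "b *\<^sub>R (x,y) - qv 0 = (b*x, b*y)" by (simp add: qv_def)
  moreover have "(b-1)*(b*x+b*y) \<le> 1" using assms(4) by (simp add: algebra_simps)
  ultimately show ?thesis using assms by (simp add: Sb_iff)
qed

lemma img_q1: assumes "1 < b" "(x,y) \<in> Sb b" "1 \<le> b*x"
  shows "b *\<^sub>R (x,y) - qv 1 \<in> Sb b"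
proof -
  from assms have h: "0 \<le> x" "0 \<le> y" "(b-1)*(x+y) \<le> 1" by (auto simp: Sb_iff)
  have "b*((b-1)*(x+y)) \<le> b*1" using h assms(1) by (intro mult_left_mono) auto
  then have "(b-1)*(b*x-1+b*y) \<le> 1" by (simp add: algebra_simps)
  moreover have "b *\<^sub>R (x,y) - qv 1 = (b*x-1, b*y)" by (simp add: qv_def)
  ultimately show ?thesis using assms h by (simp add: Sb_iff)
qed

lemma img_q2: assumes "1 < b" "(x,y) \<in> Sb b" "1 \<le> b*y"
  shows "b *\<^sub>R (x,y) - qv 2 \<in> Sb b"
proof -
  from assms have h: "0 \<le> x" "0 \<le> y" "(b-1)*(x+y) \<le> 1" by (auto simp: Sb_iff)
  have "b*((b-1)*(x+y)) \<le> b*1" using h assms(1) by (intro mult_left_mono) auto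
  then have "(b-1)*(b*x+(b*y-1)) \<le> 1" by (simp add: algebra_simps)
  moreover have "b *\<^sub>R (x,y) - qv 2 = (b*x, b*y-1)" by (simp add: qv_def)
  ultimately show ?thesis using assms h by (simp add: Sb_iff)
qed

lemma low_sum: assumes "1 < b" "(x,y) \<in> Sb b" "x + y \<le> 1/(b*(b-1))"
  shows "b*(b-1)*(x+y) \<le> 1"
proof -
  have "b*(b-1) > 0" using assms by simp
  then show ?thesis using assms(3) by (simp add: field_simps)
qed

lemma ge_inv: fixes b x :: real assumes "1 < b" "1/b \<le> x" shows "1 \<le> b*x"
proof -
  have "0 < b" using assms by simp
  then show ?thesis using assms(2) by (simp add: field_simps)
qed

lemma reg_E0: assumes "1 < b" "b < 3/2" "(x,y) \<in> E0 b"
  shows "b *\<^sub>R (x,y) - qv 0 \<in> Sb b"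
proof -
  from assms have h: "0 \<le> x" "0\<le>y" "b*x < 1" "b*y < 1" by (auto simp: E0_def Sb_def field_simps)
  have "(b-1)*(b*x+b*y) \<le> (b-1)*2" using h assms(1) by (intro mult_left_mono) auto
  also have "\<dots> \<le> 1" using assms(2) by (simp add: algebra_simps)
  finally show ?thesis using h assms by (intro img_q0) (auto simp: algebra_simps)
qed

lemma reg_E1: assumes "1 < b" "b < 3/2" "(x,y) \<in> E1 b"
  shows "b *\<^sub>R (x,y) - qv 1 \<in> Sb b"
proof -
  have "b-1 > 0" "b*(b-1) > 0" using assms by auto
  from assms have h: "(x,y) \<in> Sb b" "b*y < 1" "1 < b*(b-1)*(x+y)"
    using \<open>b*(b-1) > 0\<close> by (auto simp: E1_def field_simps)
  have "(b-1)*(b*y) \<le> (b-1)*1" using h \<open>b-1>0\<close> by (intro mult_left_mono) auto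
  then have "b*(b-1)*x > 2 - b" using h(3) by (simp add: algebra_simps)
  moreover have "2 - b \<ge> (b-1)*1" using assms(2) by (simp add: algebra_simps)
  ultimately have "b*(b-1)*x \<ge> (b-1)*1" by linarith
  then have "b*x \<ge> 1" using \<open>b-1>0\<close> by (simp add: mult.commute mult.left_commute)
  then show ?thesis using h assms by (intro img_q1) auto
qed

lemma reg_E2: assumes "1 < b" "b < 3/2" "(x,y) \<in> E2 b"
  shows "b *\<^sub>R (x,y) - qv 2 \<in> Sb b"
proof -
  have "b-1 > 0" "b*(b-1) > 0" using assms by auto
  from assms have h: "(x,y) \<in> Sb b" "b*x < 1" "1 < b*(b-1)*(x+y)"
    using \<open>b*(b-1) > 0\<close> by (auto simp: E2_def field_simps)
  have "(b-1)*(b*x) \<le> (b-1)*1" using h \<open>b-1>0\<close> by (intro mult_left_mono) auto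
  then have "b*(b-1)*y > 2 - b" using h(3) by (simp add: algebra_simps)
  moreover have "2 - b \<ge> (b-1)*1" using assms(2) by (simp add: algebra_simps)
  ultimately have "b*(b-1)*y \<ge> (b-1)*1" by linarith
  then have "b*y \<ge> 1" using \<open>b-1>0\<close> by (simp add: mult.commute mult.left_commute)
  then show ?thesis using h assms by (intro img_q2) auto
qed

lemma reg_C01: assumes "1 < b" "(x,y) \<in> C01 b"
  shows "b *\<^sub>R (x,y) - qv 0 \<in> Sb b" "b *\<^sub>R (x,y) - qv 1 \<in> Sb b"
proof -
  from assms have h: "(x,y) \<in> Sb b" "1/b \<le> x" "x + y \<le> 1/(b*(b-1))" "0 \<le> x" "0 \<le> y"
    by (auto simp: C01_def Sb_def)
  show "b *\<^sub>R (x,y) - qv 0 \<in> Sb b" using h assms by (intro img_q0 low_sum) auto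
  show "b *\<^sub>R (x,y) - qv 1 \<in> Sb b" using h assms by (intro img_q1 ge_inv) auto
qed

lemma reg_C02: assumes "1 < b" "(x,y) \<in> C02 b"
  shows "b *\<^sub>R (x,y) - qv 0 \<in> Sb b" "b *\<^sub>R (x,y) - qv 2 \<in> Sb b"
proof -
  from assms have h: "(x,y) \<in> Sb b" "1/b \<le> y" "x + y \<le> 1/(b*(b-1))" "0 \<le> x" "0 \<le> y"
    by (auto simp: C02_def Sb_def)
  show "b *\<^sub>R (x,y) - qv 0 \<in> Sb b" using h assms by (intro img_q0 low_sum) auto
  show "b *\<^sub>R (x,y) - qv 2 \<in> Sb b" using h assms by (intro img_q2 ge_inv) auto
qed

lemma reg_C12: assumes "1 < b" "(x,y) \<in> C12 b"
  shows "b *\<^sub>R (x,y) - qv 1 \<in> Sb b" "b *\<^sub>R (x,y) - qv 2 \<in> Sb b"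
proof -
  from assms have h: "(x,y) \<in> Sb b" "1/b \<le> y" "1/b \<le> x"
    by (auto simp: C12_def Sb_def)
  show "b *\<^sub>R (x,y) - qv 1 \<in> Sb b" using h assms by (intro img_q1 ge_inv) auto
  show "b *\<^sub>R (x,y) - qv 2 \<in> Sb b" using h assms by (intro img_q2 ge_inv) auto
qed

lemma reg_C012: assumes "1 < b" "(x,y) \<in> C012 b"
  shows "b *\<^sub>R (x,y) - qv 0 \<in> Sb b" "b *\<^sub>R (x,y) - qv 1 \<in> Sb b" "b *\<^sub>R (x,y) - qv 2 \<in> Sb b"
proof -
  from assms have h: "(x,y) \<in> Sb b" "1/b \<le> y" "1/b \<le> x" "x + y \<le> 1/(b*(b-1))" "0 \<le> x" "0 \<le> y"
    by (auto simp: C012_def Sb_def)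
  show "b *\<^sub>R (x,y) - qv 0 \<in> Sb b" using h assms by (intro img_q0 low_sum) auto
  show "b *\<^sub>R (x,y) - qv 1 \<in> Sb b" using h assms by (intro img_q1 ge_inv) auto
  show "b *\<^sub>R (x,y) - qv 2 \<in> Sb b" using h assms by (intro img_q2 ge_inv) auto
qed

lemma cover: assumes "1 < b" "z \<in> Sb b"
  shows "z \<in> E0 b \<or> z \<in> E1 b \<or> z \<in> E2 b \<or> z \<in> C01 b \<or> z \<in> C12 b \<or> z \<in> C02 b \<or> z \<in> C012 b"
  using assms by (cases z) (auto simp: E0_def E1_def E2_def C01_def C12_def C02_def C012_def Sb_def)

lemma E0_borel[measurable]: "E0 b \<in> sets borel"
proof -
  have "E0 b = {p \<in> space borel. 0 \<le> fst p \<and> 0 \<le> snd p \<and> fst p + snd p \<le> 1 / (b - 1) \<and> fst p < 1/b \<and> snd p < 1/b}"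
    unfolding E0_def Sb_def by auto
  also have "\<dots> \<in> sets borel" unfolding borel_prod[symmetric] by measurable
  finally show ?thesis .
qed

lemma E1_borel[measurable]: "E1 b \<in> sets borel"
proof -
  have "E1 b = {p \<in> space borel. 0 \<le> fst p \<and> 0 \<le> snd p \<and> fst p + snd p \<le> 1 / (b - 1) \<and> snd p < 1/b \<and> 1/(b*(b-1)) < fst p + snd p}"
    unfolding E1_def Sb_def by auto
  also have "\<dots> \<in> sets borel" unfolding borel_prod[symmetric] by measurable
  finally show ?thesis .
qed

lemma E2_borel[measurable]: "E2 b \<in> sets borel"
proof -
  have "E2 b = {p \<in> space borel. 0 \<le> fst p \<and> 0 \<le> snd p \<and> fst p + snd p \<le> 1 / (b - 1) \<and> fst p < 1/b \<and> 1/(b*(b-1)) < fst p + snd p}"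
    unfolding E2_def Sb_def by auto
  also have "\<dots> \<in> sets borel" unfolding borel_prod[symmetric] by measurable
  finally show ?thesis .
qed

lemma C01_borel[measurable]: "C01 b \<in> sets borel"
proof -
  have "C01 b = {p \<in> space borel. 0 \<le> fst p \<and> 0 \<le> snd p \<and> fst p + snd p \<le> 1 / (b - 1) \<and> fst p \<ge> 1/b \<and> snd p < 1/b \<and> fst p + snd p \<le> 1/(b*(b-1))}"
    unfolding C01_def Sb_def by auto
  also have "\<dots> \<in> sets borel" unfolding borel_prod[symmetric] by measurable
  finally show ?thesis .
qed

lemma C12_borel[measurable]: "C12 b \<in> sets borel"
proof -
  have "C12 b = {p \<in> space borel. 0 \<le> fst p \<and> 0 \<le> snd p \<and> fst p + snd p \<le> 1 / (b - 1) \<and> fst p \<ge> 1/b \<and> snd p \<ge> 1/b \<and> 1/(b*(b-1)) < fst p + snd p}"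
    unfolding C12_def Sb_def by auto
  also have "\<dots> \<in> sets borel" unfolding borel_prod[symmetric] by measurable
  finally show ?thesis .
qed

lemma C02_borel[measurable]: "C02 b \<in> sets borel"
proof -
  have "C02 b = {p \<in> space borel. 0 \<le> fst p \<and> 0 \<le> snd p \<and> fst p + snd p \<le> 1 / (b - 1) \<and> fst p < 1/b \<and> snd p \<ge> 1/b \<and> fst p + snd p \<le> 1/(b*(b-1))}"
    unfolding C02_def Sb_def by auto
  also have "\<dots> \<in> sets borel" unfolding borel_prod[symmetric] by measurable
  finally show ?thesis .
qed

lemma C012_borel[measurable]: "C012 b \<in> sets borel"
proof -
  have "C012 b = {p \<in> space borel. 0 \<le> fst p \<and> 0 \<le> snd p \<and> fst p + snd p \<le> 1 / (b - 1) \<and> fst p \<ge> 1/b \<and> snd p \<ge> 1/b \<and> fst p + snd p \<le> 1/(b*(b-1))}"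
    unfolding C012_def Sb_def by auto
  also have "\<dots> \<in> sets borel" unfolding borel_prod[symmetric] by measurable
  finally show ?thesis .
qed

lemma Sb_borel[measurable]: "Sb b \<in> sets borel"
proof -
  have "Sb b = {p \<in> space borel. 0 \<le> fst p \<and> 0 \<le> snd p \<and> fst p + snd p \<le> 1 / (b - 1)}"
    unfolding Sb_def Sb_def by auto
  also have "\<dots> \<in> sets borel" unfolding borel_prod[symmetric] by measurable
  finally show ?thesis .
qed
lemma adig_borel[measurable]: "adig b k \<in> borel_measurable borel"
  unfolding adig_def by measurable

lemma tau_borel[measurable]: "tau b k \<in> borel_measurable borel"
  unfolding tau_def by measurable

lemma comp_meas: "(\<lambda>\<omega>. \<omega> i) \<in> measurable (PiM UNIV (\<lambda>_. density (count_space I) f)) (count_space UNIV)"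
  by (rule measurable_compose[OF measurable_component_singleton[of i UNIV]])
     (auto simp: measurable_cong_sets[OF sets_density refl])

lemma shift_meas[measurable]: "shift \<in> measurable (PiM UNIV (\<lambda>_. M)) (PiM UNIV (\<lambda>_. M))"
  unfolding shift_def by (rule measurable_PiM_single') (auto simp: space_PiM)

lemma tri_swap:
  assumes s1: "sigma_finite_measure M1" and s2: "sigma_finite_measure M2" and s3: "sigma_finite_measure M3"
    and f[measurable]: "f \<in> borel_measurable (M1 \<Otimes>\<^sub>M (M2 \<Otimes>\<^sub>M M3))"
  shows "integral\<^sup>N (M1 \<Otimes>\<^sub>M (M2 \<Otimes>\<^sub>M M3)) f = (\<integral>\<^sup>+z. \<integral>\<^sup>+x. \<integral>\<^sup>+y. f (x,y,z) \<partial>M2 \<partial>M1 \<partial>M3)"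
proof -
  interpret M1: sigma_finite_measure M1 by fact
  interpret M2: sigma_finite_measure M2 by fact
  interpret M3: sigma_finite_measure M3 by fact
  interpret P23: pair_sigma_finite M2 M3 ..
  interpret P13: pair_sigma_finite M1 M3 ..
  have "integral\<^sup>N (M1 \<Otimes>\<^sub>M (M2 \<Otimes>\<^sub>M M3)) f = (\<integral>\<^sup>+x. \<integral>\<^sup>+w. f (x,w) \<partial>(M2 \<Otimes>\<^sub>M M3) \<partial>M1)"
    by (rule sigma_finite_measure.nn_integral_fst[OF sigma_finite_pair_measure[OF s2 s3], symmetric]) fact
  also have "\<dots> = (\<integral>\<^sup>+x. \<integral>\<^sup>+z. \<integral>\<^sup>+y. f (x,y,z) \<partial>M2 \<partial>M3 \<partial>M1)"
  proof (rule nn_integral_cong)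
    fix x assume x: "x \<in> space M1"
    have [measurable]: "(\<lambda>w. f (x, w)) \<in> borel_measurable (M2 \<Otimes>\<^sub>M M3)"
      using x by measurable
    have "(\<integral>\<^sup>+w. f (x,w) \<partial>(M2 \<Otimes>\<^sub>M M3)) = (\<integral>\<^sup>+y. \<integral>\<^sup>+z. f (x,y,z) \<partial>M3 \<partial>M2)"
      by (rule M3.nn_integral_fst[symmetric]) measurable
    also have "\<dots> = (\<integral>\<^sup>+z. \<integral>\<^sup>+y. f (x,y,z) \<partial>M2 \<partial>M3)"
      by (rule P23.Fubini'[symmetric]) measurable
    finally show "(\<integral>\<^sup>+w. f (x,w) \<partial>(M2 \<Otimes>\<^sub>M M3)) = (\<integral>\<^sup>+z. \<integral>\<^sup>+y. f (x,y,z) \<partial>M2 \<partial>M3)" .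
  qed
  also have "\<dots> = (\<integral>\<^sup>+z. \<integral>\<^sup>+x. \<integral>\<^sup>+y. f (x,y,z) \<partial>M2 \<partial>M1 \<partial>M3)"
    by (rule P13.Fubini'[symmetric]) measurable
  finally show ?thesis .
qed

lemma iter_integral:
  fixes I :: "nat set" and w h :: "nat \<Rightarrow> real" and A
  defines "M \<equiv> density (count_space I) (\<lambda>i. ennreal (w i))"
  assumes I: "finite I" and w: "\<And>i. i \<in> I \<Longrightarrow> 0 \<le> w i" and w1: "(\<Sum>i\<in>I. w i) = 1"
    and h: "\<And>i. i \<in> I \<Longrightarrow> 0 \<le> h i"
    and A: "A \<in> sets (PiM UNIV (\<lambda>_. M))"
  shows "(\<integral>\<^sup>+\<omega>. ennreal (h (\<omega> 0)) * indicator A (shift \<omega>) \<partial>(PiM UNIV (\<lambda>_. M)))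
       = ennreal (\<Sum>i\<in>I. w i * h i) * emeasure (PiM UNIV (\<lambda>_. M)) A"
proof -
  have sM: "sets M = sets (count_space I)" unfolding M_def by simp
  interpret M: prob_space M
  proof
    have "emeasure M (space M) = (\<Sum>i\<in>I. ennreal (w i))"
      unfolding M_def using I by (simp add: emeasure_density nn_integral_count_space_finite)
    also have "\<dots> = 1" using w w1 by simp
    finally show "emeasure M (space M) = 1" .
  qed
  interpret S: sequence_space M ..
  have meas: "(\<lambda>(s, \<omega>). ennreal (h s) * indicator A \<omega>) \<in> borel_measurable (M \<Otimes>\<^sub>M S.S)"
  proof -
    have [measurable]: "(\<lambda>s. ennreal (h s)) \<in> borel_measurable M"
      unfolding measurable_cong_sets[OF sM refl] by simp
    have [measurable]: "A \<in> sets S.S" using A .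
    show ?thesis by measurable
  qed
  have "(\<integral>\<^sup>+\<omega>. ennreal (h (\<omega> 0)) * indicator A (shift \<omega>) \<partial>S.S)
      = (\<integral>\<^sup>+\<omega>. ennreal (h (\<omega> 0)) * indicator A (shift \<omega>) \<partial>distr (M \<Otimes>\<^sub>M S.S) S.S (\<lambda>(s, \<omega>). case_nat s \<omega>))"
    by (simp add: S.PiM_iter)
  also have "\<dots> = (\<integral>\<^sup>+x. ennreal (h (case_nat (fst x) (snd x) 0)) * indicator A (shift (case_nat (fst x) (snd x))) \<partial>(M \<Otimes>\<^sub>M S.S))"
  proof -
    have T: "(\<lambda>(s, \<omega>). case_nat s \<omega>) \<in> measurable (M \<Otimes>\<^sub>M S.S) S.S"
      by (simp add: split_beta') measurable
    have [measurable]: "(\<lambda>s. ennreal (h s)) \<in> borel_measurable M"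
      unfolding measurable_cong_sets[OF sM refl] by simp
    have [measurable]: "A \<in> sets S.S" using A .
    have [measurable]: "shift \<in> measurable S.S S.S" unfolding shift_def
      by (rule measurable_PiM_single') (auto simp: space_PiM)
    have f: "(\<lambda>\<omega>. ennreal (h (\<omega> 0)) * indicator A (shift \<omega>)) \<in> borel_measurable S.S"
      by measurable
    show ?thesis by (subst nn_integral_distr[OF T]) (use f in \<open>simp_all add: split_beta'\<close>)
  qed
  also have "\<dots> = (\<integral>\<^sup>+x. ennreal (h (fst x)) * indicator A (snd x) \<partial>(M \<Otimes>\<^sub>M S.S))"
    by (simp add: shift_def)
  also have "\<dots> = (\<integral>\<^sup>+s. \<integral>\<^sup>+\<omega>. ennreal (h s) * indicator A \<omega> \<partial>S.S \<partial>M)"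
    using meas by (subst S.nn_integral_fst[symmetric]) (auto simp: split_beta')
  also have "\<dots> = (\<integral>\<^sup>+s. ennreal (h s) * emeasure S.S A \<partial>M)"
    using A by (simp add: nn_integral_cmult_indicator)
  also have "\<dots> = (\<integral>\<^sup>+s. ennreal (h s) \<partial>M) * emeasure S.S A"
    by (rule nn_integral_multc) (simp add: measurable_cong_sets[OF sM refl])
  also have "(\<integral>\<^sup>+s. ennreal (h s) \<partial>M) = ennreal (\<Sum>i\<in>I. w i * h i)"
    unfolding M_def using I w h
    by (simp add: nn_integral_density nn_integral_count_space_finite ennreal_mult[symmetric] sum_nonneg)
  finally show ?thesis .
qed

lemma qv_cases: "qv n = qv 0 \<or> qv n = qv 1 \<or> qv n = qv 2"
  by (simp add: qv_def)

lemma tau_in: assumes "1 < b" "b < 3/2" "z \<in> Sb b" shows "tau b k z \<in> Sb b"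
proof -
  obtain x y where z: "z = (x,y)" by (cases z)
  have q: "qv ((k - 1) mod 3) = qv 0 \<or> qv ((k - 1) mod 3) = qv 1 \<or> qv ((k - 1) mod 3) = qv 2"
    by (rule qv_cases)
  show ?thesis
    using cover[OF assms(1,3)] q reg_E0[OF assms(1,2)] reg_E1[OF assms(1,2)] reg_E2[OF assms(1,2)]
      reg_C01[OF assms(1)] reg_C02[OF assms(1)] reg_C12[OF assms(1)] reg_C012[OF assms(1)]
    unfolding z tau_def adig_def by (auto split: if_split)
qed

lemma chain_cases:
  assumes "1 < b" "z \<in> Sb b"
  obtains "z \<in> E0 b"
  | "z \<notin> E0 b" "z \<in> E1 b"
  | "z \<notin> E0 b" "z \<notin> E1 b" "z \<in> E2 b"
  | "z \<notin> E0 b" "z \<notin> E1 b" "z \<notin> E2 b" "z \<in> C01 b"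
  | "z \<notin> E0 b" "z \<notin> E1 b" "z \<notin> E2 b" "z \<notin> C01 b" "z \<in> C12 b"
  | "z \<notin> E0 b" "z \<notin> E1 b" "z \<notin> E2 b" "z \<notin> C01 b" "z \<notin> C12 b" "z \<in> C02 b"
  | "z \<notin> E0 b" "z \<notin> E1 b" "z \<notin> E2 b" "z \<notin> C01 b" "z \<notin> C12 b" "z \<notin> C02 b" "z \<in> C012 b"
  using cover[OF assms] by blast

lemma space_rb: "space (restrict_space borel (Sb b)) = Sb b"
  by (simp add: space_restrict_space)

lemma space_mu: "sets \<mu> = sets (restrict_space borel (Sb b)) \<Longrightarrow> space \<mu> = Sb b"
  using sets_eq_imp_space_eq[of \<mu> "restrict_space borel (Sb b)"] by (simp add: space_rb)

lemma base_meas: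
  assumes s\<mu>: "sets \<mu> = sets (restrict_space borel (Sb b))"
  shows "(\<lambda>x. snd (snd x)) \<in> borel_measurable (m1 p \<Otimes>\<^sub>M (m2 s t \<Otimes>\<^sub>M \<mu>))"
    "(\<lambda>x. fst x 0) \<in> measurable (m1 p \<Otimes>\<^sub>M (m2 s t \<Otimes>\<^sub>M \<mu>)) (count_space UNIV)"
    "(\<lambda>x. fst (snd x) 0) \<in> measurable (m1 p \<Otimes>\<^sub>M (m2 s t \<Otimes>\<^sub>M \<mu>)) (count_space UNIV)"
    "qv \<in> measurable (count_space UNIV) borel"
proof -
  have "(\<lambda>x. x) \<in> borel_measurable \<mu>" unfolding measurable_cong_sets[OF s\<mu> refl]
    by (rule measurable_restrict_space1) simp
  then show "(\<lambda>x. snd (snd x)) \<in> borel_measurable (m1 p \<Otimes>\<^sub>M (m2 s t \<Otimes>\<^sub>M \<mu>))" by measurable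
  show "(\<lambda>x. fst x 0) \<in> measurable (m1 p \<Otimes>\<^sub>M (m2 s t \<Otimes>\<^sub>M \<mu>)) (count_space UNIV)"
    unfolding m1_def by (rule measurable_compose[OF measurable_fst comp_meas])
  show "(\<lambda>x. fst (snd x) 0) \<in> measurable (m1 p \<Otimes>\<^sub>M (m2 s t \<Otimes>\<^sub>M \<mu>)) (count_space UNIV)"
    unfolding m2_def by (rule measurable_compose[OF measurable_compose[OF measurable_snd measurable_fst] comp_meas])
  show "qv \<in> measurable (count_space UNIV) borel" by simp
qed

lemma shift_m1[measurable]: "shift \<in> measurable (m1 p) (m1 p)"
  unfolding m1_def by (rule shift_meas)

lemma shift_m2[measurable]: "shift \<in> measurable (m2 s t) (m2 s t)"
  unfolding m2_def by (rule shift_meas)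

lemma into_mu:
  assumes s\<mu>: "sets \<mu> = sets (restrict_space borel (Sb b))"
    and f: "f \<in> borel_measurable N" and sp: "\<And>x. x \<in> space N \<Longrightarrow> f x \<in> Sb b"
  shows "f \<in> measurable N \<mu>"
  unfolding measurable_cong_sets[OF refl s\<mu>]
  by (rule measurable_restrict_space2) (use f sp in auto)



definition kz :: "real \<Rightarrow> nat \<Rightarrow> nat \<Rightarrow> real \<times> real \<Rightarrow> real \<times> real" where
  "kz b i j z =
     (if z \<in> E0 b then b *\<^sub>R z - qv 0
      else if z \<in> E1 b then b *\<^sub>R z - qv 1
      else if z \<in> E2 b then b *\<^sub>R z - qv 2
      else if z \<in> C01 b then b *\<^sub>R z - (if i = 0 then qv 0 else qv 1)
      else if z \<in> C12 b then b *\<^sub>R z - (if i = 0 then qv 1 else qv 2)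
      else if z \<in> C02 b then b *\<^sub>R z - (if i = 0 then qv 0 else qv 2)
      else if z \<in> C012 b then b *\<^sub>R z - qv j
      else z)"

lemma kz_borel[measurable]: "kz b i j \<in> borel_measurable borel"
  unfolding kz_def by measurable

lemma kz_in: assumes "1 < b" "b < 3/2" "z \<in> Sb b" shows "kz b i j z \<in> Sb b"
proof -
  obtain x y where z: "z = (x,y)" by (cases z)
  from chain_cases[OF assms(1,3)] show ?thesis
  proof cases
    case 1
    then have "kz b i j z = b *\<^sub>R z - qv 0" by (simp add: kz_def)
    moreover have "b *\<^sub>R z - qv 0 \<in> Sb b" using reg_E0[OF assms(1,2), of x y] 1 z by blast
    ultimately show ?thesis by (simp only:)
  next
    case 2
    then have "kz b i j z = b *\<^sub>R z - qv 1" by (simp add: kz_def)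
    moreover have "b *\<^sub>R z - qv 1 \<in> Sb b" using reg_E1[OF assms(1,2), of x y] 2 z by blast
    ultimately show ?thesis by (simp only:)
  next
    case 3
    then have "kz b i j z = b *\<^sub>R z - qv 2" by (simp add: kz_def)
    moreover have "b *\<^sub>R z - qv 2 \<in> Sb b" using reg_E2[OF assms(1,2), of x y] 3 z by blast
    ultimately show ?thesis by (simp only:)
  next
    case 4
    then have "kz b i j z = (if i = 0 then b *\<^sub>R z - qv 0 else b *\<^sub>R z - qv 1)" by (simp add: kz_def)
    moreover have "b *\<^sub>R z - qv 0 \<in> Sb b" "b *\<^sub>R z - qv 1 \<in> Sb b" using reg_C01[OF assms(1), of x y] 4 z by blast+
    ultimately show ?thesis by (cases "i = 0") simp_all
  next
    case 5
    then have "kz b i j z = (if i = 0 then b *\<^sub>R z - qv 1 else b *\<^sub>R z - qv 2)" by (simp add: kz_def)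
    moreover have "b *\<^sub>R z - qv 1 \<in> Sb b" "b *\<^sub>R z - qv 2 \<in> Sb b" using reg_C12[OF assms(1), of x y] 5 z by blast+
    ultimately show ?thesis by (cases "i = 0") simp_all
  next
    case 6
    then have "kz b i j z = (if i = 0 then b *\<^sub>R z - qv 0 else b *\<^sub>R z - qv 2)" by (simp add: kz_def)
    moreover have "b *\<^sub>R z - qv 0 \<in> Sb b" "b *\<^sub>R z - qv 2 \<in> Sb b" using reg_C02[OF assms(1), of x y] 6 z by blast+
    ultimately show ?thesis by (cases "i = 0") simp_all
  next
    case 7
    then have "kz b i j z = b *\<^sub>R z - qv j" by (simp add: kz_def)
    moreover have "b *\<^sub>R z - qv 0 \<in> Sb b" "b *\<^sub>R z - qv 1 \<in> Sb b" "b *\<^sub>R z - qv 2 \<in> Sb b"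
      using reg_C012[OF assms(1), of x y] 7 z by blast+
    ultimately show ?thesis using qv_cases[of j] by auto
  qed
qed

lemma K_meas:
  assumes b: "1 < b" "b < 3/2" and s\<mu>: "sets \<mu> = sets (restrict_space borel (Sb b))"
  shows "Kmap b \<in> measurable (m1 p \<Otimes>\<^sub>M (m2 s t \<Otimes>\<^sub>M \<mu>)) (m1 p \<Otimes>\<^sub>M (m2 s t \<Otimes>\<^sub>M \<mu>))"
proof -
  let ?M = "m1 p \<Otimes>\<^sub>M (m2 s t \<Otimes>\<^sub>M \<mu>)"
  note [measurable] = base_meas(1-3)[OF s\<mu>, where p=p and s=s and t=t] base_meas(4)[OF s\<mu>]
  define Kz where "Kz (x::(nat \<Rightarrow> nat) \<times> (nat \<Rightarrow> nat) \<times> real \<times> real) = kz b (fst x 0) (fst (snd x) 0) (snd (snd x))" for x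
  define Kw where "Kw (x::(nat \<Rightarrow> nat) \<times> (nat \<Rightarrow> nat) \<times> real \<times> real) = (let z = snd (snd x) in
     (if z \<in> E0 b \<or> z \<in> E1 b \<or> z \<in> E2 b then fst x
      else if z \<in> C01 b \<or> z \<in> C12 b \<or> z \<in> C02 b then shift (fst x) else fst x))" for x
  define Ku where "Ku (x::(nat \<Rightarrow> nat) \<times> (nat \<Rightarrow> nat) \<times> real \<times> real) = (let z = snd (snd x) in
     (if z \<in> E0 b \<or> z \<in> E1 b \<or> z \<in> E2 b \<or> z \<in> C01 b \<or> z \<in> C12 b \<or> z \<in> C02 b then fst (snd x)
      else if z \<in> C012 b then shift (fst (snd x)) else fst (snd x)))" for x
  have eq: "Kmap b = (\<lambda>x. (Kw x, Ku x, Kz x))"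
    by (rule ext) (auto simp: Kmap_def Kw_def Ku_def Kz_def kz_def Let_def split: prod.split)
  have [measurable]: "Kw \<in> measurable ?M (m1 p)"
    unfolding Kw_def Let_def by measurable
  have [measurable]: "Ku \<in> measurable ?M (m2 s t)"
    unfolding Ku_def Let_def by measurable
  have [measurable]: "Kz \<in> measurable ?M \<mu>"
  proof (rule into_mu[OF s\<mu>])
    show "Kz \<in> borel_measurable ?M" unfolding Kz_def
    proof (rule measurable_compose_countable[where f="\<lambda>i x. kz b i (fst (snd x) 0) (snd (snd x))"])
      fix i
      show "(\<lambda>x. kz b i (fst (snd x) 0) (snd (snd x))) \<in> borel_measurable ?M"
      proof (rule measurable_compose_countable[where f="\<lambda>j x. kz b i j (snd (snd x))"])
        fix j show "(\<lambda>x. kz b i j (snd (snd x))) \<in> borel_measurable ?M"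
          by (rule measurable_compose[OF _ kz_borel]) measurable
      qed measurable
    qed measurable
    fix x assume x: "x \<in> space ?M"
    then have "snd (snd x) \<in> space \<mu>" by (simp only: space_pair_measure mem_Times_iff)
    then have z: "snd (snd x) \<in> Sb b" using space_mu[OF s\<mu>] by simp
    show "Kz x \<in> Sb b" unfolding Kz_def by (rule kz_in[OF b z])
  qed
  show ?thesis unfolding eq by measurable
qed

lemma R_meas:
  assumes b: "1 < b" "b < 3/2" and s\<mu>: "sets \<mu> = sets (restrict_space borel (Sb b))"
  shows "Rmap b \<in> measurable (m1 p \<Otimes>\<^sub>M (m2 s t \<Otimes>\<^sub>M \<mu>)) (m1 p \<Otimes>\<^sub>M (m2 s t \<Otimes>\<^sub>M \<mu>))"
proof -
  let ?M = "m1 p \<Otimes>\<^sub>M (m2 s t \<Otimes>\<^sub>M \<mu>)"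
  note [measurable] = base_meas(1-3)[OF s\<mu>, where p=p and s=s and t=t] base_meas(4)[OF s\<mu>]
  define Rz where "Rz (x::(nat \<Rightarrow> nat) \<times> (nat \<Rightarrow> nat) \<times> real \<times> real) = tau b (3 * fst x 0 + fst (snd x) 0 + 1) (snd (snd x))" for x
  have eq: "Rmap b = (\<lambda>x. (shift (fst x), shift (fst (snd x)), Rz x))"
    by (rule ext) (auto simp: Rmap_def Rz_def split: prod.split)
  have [measurable]: "Rz \<in> measurable ?M \<mu>"
  proof (rule into_mu[OF s\<mu>])
    show "Rz \<in> borel_measurable ?M" unfolding Rz_def by measurable
    fix x assume x: "x \<in> space ?M"
    then have "snd (snd x) \<in> space \<mu>" by (simp only: space_pair_measure mem_Times_iff)
    then have z: "snd (snd x) \<in> Sb b" using space_mu[OF s\<mu>] by simp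
    show "Rz x \<in> Sb b" unfolding Rz_def by (rule tau_in[OF b z])
  qed
  show ?thesis unfolding eq by measurable
qed



lemma prob_PiM:
  fixes I :: "nat set" and w :: "nat \<Rightarrow> real"
  assumes I: "finite I" and w: "\<And>i. i \<in> I \<Longrightarrow> 0 \<le> w i" and w1: "(\<Sum>i\<in>I. w i) = 1"
  shows "prob_space (PiM (UNIV::nat set) (\<lambda>_. density (count_space I) (\<lambda>i. ennreal (w i))))"
proof -
  interpret M: prob_space "density (count_space I) (\<lambda>i. ennreal (w i))"
  proof
    have "emeasure (density (count_space I) (\<lambda>i. ennreal (w i))) (space (density (count_space I) (\<lambda>i. ennreal (w i)))) = (\<Sum>i\<in>I. ennreal (w i))"
      using I by (simp add: emeasure_density nn_integral_count_space_finite)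
    also have "\<dots> = 1" using w w1 by simp
    finally show "emeasure (density (count_space I) (\<lambda>i. ennreal (w i))) (space (density (count_space I) (\<lambda>i. ennreal (w i)))) = 1" .
  qed
  interpret S: sequence_space "density (count_space I) (\<lambda>i. ennreal (w i))" ..
  show ?thesis by (rule S.P.prob_space_axioms)
qed

lemma prob_m1: "0 \<le> p \<Longrightarrow> p \<le> 1 \<Longrightarrow> prob_space (m1 p)"
  unfolding m1_def by (rule prob_PiM) auto

lemma prob_m2: "0 \<le> s \<Longrightarrow> 0 \<le> t \<Longrightarrow> s + t \<le> 1 \<Longrightarrow> prob_space (m2 s t)"
  unfolding m2_def by (rule prob_PiM) auto

lemma L1:
  assumes "0 \<le> p" "p \<le> 1" "A \<in> sets (m1 p)" "0 \<le> h 0" "0 \<le> h 1"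
  shows "(\<integral>\<^sup>+\<omega>. ennreal (h (\<omega> 0)) * indicator A (shift \<omega>) \<partial>m1 p) = ennreal (p * h 0 + (1-p) * h 1) * emeasure (m1 p) A"
proof -
  have "(\<integral>\<^sup>+\<omega>. ennreal (h (\<omega> 0)) * indicator A (shift \<omega>) \<partial>m1 p) = ennreal (\<Sum>i\<in>{0,1}. (if i = 0 then p else 1 - p) * h i) * emeasure (m1 p) A"
    unfolding m1_def by (rule iter_integral) (use assms in \<open>auto simp: m1_def\<close>)
  then show ?thesis by simp
qed

lemma L2:
  assumes "0 \<le> s" "0 \<le> t" "s + t \<le> 1" "A \<in> sets (m2 s t)" "0 \<le> h 0" "0 \<le> h 1" "0 \<le> h 2"
  shows "(\<integral>\<^sup>+\<omega>. ennreal (h (\<omega> 0)) * indicator A (shift \<omega>) \<partial>m2 s t) = ennreal (s * h 0 + t * h 1 + (1-s-t) * h 2) * emeasure (m2 s t) A"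
proof -
  have "(\<integral>\<^sup>+\<omega>. ennreal (h (\<omega> 0)) * indicator A (shift \<omega>) \<partial>m2 s t) = ennreal (\<Sum>i\<in>{0,1,2}. (if i = 0 then s else if i = 1 then t else 1 - s - t) * h i) * emeasure (m2 s t) A"
    unfolding m2_def by (rule iter_integral) (use assms in \<open>auto simp: m2_def\<close>)
  then show ?thesis by (simp add: algebra_simps)
qed

lemma comp0_m1[measurable]: "(\<lambda>\<omega>. \<omega> 0) \<in> measurable (m1 p) (count_space UNIV)"
  unfolding m1_def by (rule comp_meas)

lemma comp0_m2[measurable]: "(\<lambda>\<omega>. \<omega> 0) \<in> measurable (m2 s t) (count_space UNIV)"
  unfolding m2_def by (rule comp_meas)

lemma caseE:
  assumes a: "a \<in> sets (m1 p)" and B: "B \<in> sets (m2 s t)"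
  shows "(\<integral>\<^sup>+\<omega>. \<integral>\<^sup>+\<upsilon>. indicator (a \<times> (B \<times> C)) (\<omega>, \<upsilon>, z') \<partial>m2 s t \<partial>m1 p)
    = ennreal (indicator C z') * emeasure (m1 p) a * emeasure (m2 s t) B"
proof -
  have "(\<integral>\<^sup>+\<omega>. \<integral>\<^sup>+\<upsilon>. indicator (a \<times> (B \<times> C)) (\<omega>, \<upsilon>, z') \<partial>m2 s t \<partial>m1 p)
      = (\<integral>\<^sup>+\<omega>. \<integral>\<^sup>+\<upsilon>. (indicator C z' * indicator a \<omega>) * indicator B \<upsilon> \<partial>m2 s t \<partial>m1 p)"
    by (intro nn_integral_cong) (auto simp: indicator_def)
  also have "\<dots> = (\<integral>\<^sup>+\<omega>. (indicator C z' * indicator a \<omega>) * emeasure (m2 s t) B \<partial>m1 p)"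
    by (intro nn_integral_cong nn_integral_cmult_indicator B)
  also have "\<dots> = (\<integral>\<^sup>+\<omega>. (indicator C z' * emeasure (m2 s t) B) * indicator a \<omega> \<partial>m1 p)"
    by (intro nn_integral_cong) (simp add: ac_simps)
  also have "\<dots> = indicator C z' * emeasure (m2 s t) B * emeasure (m1 p) a"
    using a by (simp add: nn_integral_cmult_indicator)
  finally show ?thesis by (simp add: ac_simps ennreal_indicator)
qed

lemma caseC:
  assumes p: "0 \<le> p" "p \<le> 1" and a: "a \<in> sets (m1 p)" and B: "B \<in> sets (m2 s t)"
  shows "(\<integral>\<^sup>+\<omega>. \<integral>\<^sup>+\<upsilon>. indicator (a \<times> (B \<times> C)) (shift \<omega>, \<upsilon>, G (\<omega> 0)) \<partial>m2 s t \<partial>m1 p)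
    = ennreal (p * indicator C (G 0) + (1-p) * indicator C (G 1)) * emeasure (m1 p) a * emeasure (m2 s t) B"
proof -
  define h where "h i = (indicator C (G i) :: real)" for i
  have [measurable]: "a \<in> sets (m1 p)" using a .
  have "(\<integral>\<^sup>+\<omega>. \<integral>\<^sup>+\<upsilon>. indicator (a \<times> (B \<times> C)) (shift \<omega>, \<upsilon>, G (\<omega> 0)) \<partial>m2 s t \<partial>m1 p)
      = (\<integral>\<^sup>+\<omega>. \<integral>\<^sup>+\<upsilon>. (ennreal (h (\<omega> 0)) * indicator a (shift \<omega>)) * indicator B \<upsilon> \<partial>m2 s t \<partial>m1 p)"
    by (intro nn_integral_cong) (auto simp: indicator_def h_def)
  also have "\<dots> = (\<integral>\<^sup>+\<omega>. (ennreal (h (\<omega> 0)) * indicator a (shift \<omega>)) * emeasure (m2 s t) B \<partial>m1 p)"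
    using B by (simp add: nn_integral_cmult_indicator)
  also have "\<dots> = (\<integral>\<^sup>+\<omega>. ennreal (h (\<omega> 0)) * indicator a (shift \<omega>) \<partial>m1 p) * emeasure (m2 s t) B"
    by (rule nn_integral_multc) measurable
  also have "\<dots> = ennreal (p * h 0 + (1-p) * h 1) * emeasure (m1 p) a * emeasure (m2 s t) B"
    using p a by (subst L1) (auto simp: h_def)
  finally show ?thesis by (simp add: h_def)
qed

lemma case3:
  assumes st: "0 \<le> s" "0 \<le> t" "s + t \<le> 1" and a: "a \<in> sets (m1 p)" and B: "B \<in> sets (m2 s t)"
  shows "(\<integral>\<^sup>+\<omega>. \<integral>\<^sup>+\<upsilon>. indicator (a \<times> (B \<times> C)) (\<omega>, shift \<upsilon>, G (\<upsilon> 0)) \<partial>m2 s t \<partial>m1 p)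
    = ennreal (s * indicator C (G 0) + t * indicator C (G 1) + (1-s-t) * indicator C (G 2)) * emeasure (m1 p) a * emeasure (m2 s t) B"
proof -
  define h where "h i = (indicator C (G i) :: real)" for i
  have [measurable]: "B \<in> sets (m2 s t)" using B .
  have "(\<integral>\<^sup>+\<omega>. \<integral>\<^sup>+\<upsilon>. indicator (a \<times> (B \<times> C)) (\<omega>, shift \<upsilon>, G (\<upsilon> 0)) \<partial>m2 s t \<partial>m1 p)
      = (\<integral>\<^sup>+\<omega>. \<integral>\<^sup>+\<upsilon>. indicator a \<omega> * (ennreal (h (\<upsilon> 0)) * indicator B (shift \<upsilon>)) \<partial>m2 s t \<partial>m1 p)"
    by (intro nn_integral_cong) (auto simp: indicator_def h_def)
  also have "\<dots> = (\<integral>\<^sup>+\<omega>. indicator a \<omega> * (\<integral>\<^sup>+\<upsilon>. ennreal (h (\<upsilon> 0)) * indicator B (shift \<upsilon>) \<partial>m2 s t) \<partial>m1 p)"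
    by (intro nn_integral_cong nn_integral_cmult) measurable
  also have "\<dots> = (\<integral>\<^sup>+\<omega>. (ennreal (s * h 0 + t * h 1 + (1-s-t) * h 2) * emeasure (m2 s t) B) * indicator a \<omega> \<partial>m1 p)"
    using st B by (subst L2) (auto simp: h_def mult.commute)
  also have "\<dots> = ennreal (s * h 0 + t * h 1 + (1-s-t) * h 2) * emeasure (m2 s t) B * emeasure (m1 p) a"
    using a by (simp add: nn_integral_cmult_indicator)
  finally show ?thesis by (simp add: h_def ac_simps)
qed

lemma caseR:
  assumes p: "0 \<le> p" "p \<le> 1" and st: "0 \<le> s" "0 \<le> t" "s + t \<le> 1"
    and a: "a \<in> sets (m1 p)" and B: "B \<in> sets (m2 s t)"
  shows "(\<integral>\<^sup>+\<omega>. \<integral>\<^sup>+\<upsilon>. indicator (a \<times> (B \<times> C)) (shift \<omega>, shift \<upsilon>, F (\<omega> 0) (\<upsilon> 0)) \<partial>m2 s t \<partial>m1 p)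
    = ennreal (p * (s * indicator C (F 0 0) + t * indicator C (F 0 1) + (1-s-t) * indicator C (F 0 2))
        + (1-p) * (s * indicator C (F 1 0) + t * indicator C (F 1 1) + (1-s-t) * indicator C (F 1 2)))
      * emeasure (m1 p) a * emeasure (m2 s t) B"
proof -
  define h where "h i j = (indicator C (F i j) :: real)" for i j
  define H where "H i = s * h i 0 + t * h i 1 + (1-s-t) * h i 2" for i
  have Hn: "0 \<le> H i" for i using st by (auto simp: H_def h_def)
  have [measurable]: "B \<in> sets (m2 s t)" using B .
  have [measurable]: "a \<in> sets (m1 p)" using a .
  have "(\<integral>\<^sup>+\<omega>. \<integral>\<^sup>+\<upsilon>. indicator (a \<times> (B \<times> C)) (shift \<omega>, shift \<upsilon>, F (\<omega> 0) (\<upsilon> 0)) \<partial>m2 s t \<partial>m1 p)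
      = (\<integral>\<^sup>+\<omega>. \<integral>\<^sup>+\<upsilon>. indicator a (shift \<omega>) * (ennreal (h (\<omega> 0) (\<upsilon> 0)) * indicator B (shift \<upsilon>)) \<partial>m2 s t \<partial>m1 p)"
    by (intro nn_integral_cong) (auto simp: indicator_def h_def)
  also have "\<dots> = (\<integral>\<^sup>+\<omega>. indicator a (shift \<omega>) * (\<integral>\<^sup>+\<upsilon>. ennreal (h (\<omega> 0) (\<upsilon> 0)) * indicator B (shift \<upsilon>) \<partial>m2 s t) \<partial>m1 p)"
    by (intro nn_integral_cong nn_integral_cmult) measurable
  also have "\<dots> = (\<integral>\<^sup>+\<omega>. (ennreal (H (\<omega> 0)) * indicator a (shift \<omega>)) * emeasure (m2 s t) B \<partial>m1 p)"
    using st B by (intro nn_integral_cong) (subst L2, auto simp: h_def H_def mult.commute mult.left_commute)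
  also have "\<dots> = (\<integral>\<^sup>+\<omega>. ennreal (H (\<omega> 0)) * indicator a (shift \<omega>) \<partial>m1 p) * emeasure (m2 s t) B"
    by (rule nn_integral_multc) measurable
  also have "\<dots> = ennreal (p * H 0 + (1-p) * H 1) * emeasure (m1 p) a * emeasure (m2 s t) B"
    using p a Hn by (subst L1) auto
  finally show ?thesis by (simp add: H_def h_def)
qed

lemma sum6: "(\<Sum>k\<in>{1..6::nat}. f k) = f 1 + f 2 + f 3 + f 4 + f 5 + f 6"
proof -
  have "{1..6::nat} = {1,2,3,4,5,6}" by auto
  then show ?thesis by (simp add: ac_simps)
qed



lemma nu_emeasure:
  assumes b: "1 < b" "b < 3/2" and s\<mu>: "sets \<mu> = sets (restrict_space borel (Sb b))"
    and wt: "\<And>k. 0 \<le> wt p s t k"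
    and C: "C \<in> sets (restrict_space borel (Sb b))"
  shows "emeasure (nu b p s t \<mu>) C = (\<integral>\<^sup>+z. ennreal (\<Sum>k\<in>{1..6}. wt p s t k * indicator C (tau b k z)) \<partial>\<mu>)"
proof -
  let ?R = "restrict_space borel (Sb b)"
  have tm[measurable]: "tau b k \<in> measurable \<mu> ?R" for k
    unfolding measurable_cong_sets[OF s\<mu> refl]
    by (rule measurable_restrict_space2) (auto simp: space_rb intro: tau_in[OF b] measurable_restrict_space1)
  have [measurable]: "C \<in> sets ?R" using C .
  define F where "F A = (\<Sum>k\<in>{1..6}. ennreal (wt p s t k) * emeasure (distr \<mu> ?R (tau b k)) A)" for A
  have nuF: "nu b p s t \<mu> = measure_of (Sb b) (sets ?R) F" unfolding nu_def F_def ..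
  have dk: "emeasure (distr \<mu> ?R (tau b k)) A = (\<integral>\<^sup>+z. indicator A (tau b k z) \<partial>\<mu>)" if A: "A \<in> sets ?R" for A k
  proof -
    have "emeasure (distr \<mu> ?R (tau b k)) A = (\<integral>\<^sup>+x. indicator A x \<partial>distr \<mu> ?R (tau b k))"
      using A by simp
    also have "\<dots> = (\<integral>\<^sup>+z. indicator A (tau b k z) \<partial>\<mu>)"
      using A by (subst nn_integral_distr) auto
    finally show ?thesis .
  qed
  have sa: "sigma_algebra (Sb b) (sets ?R)"
    using sets.sigma_algebra_axioms[of ?R] by (simp add: space_rb)
  have pos: "positive (sets ?R) F"
    by (simp add: positive_def F_def)
  have ca: "countably_additive (sets ?R) F"
    unfolding countably_additive_def
  proof (intro allI impI)
    fix A :: "nat \<Rightarrow> (real \<times> real) set"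
    assume A: "range A \<subseteq> sets ?R" "disjoint_family A" "(\<Union>i. A i) \<in> sets ?R"
    have "(\<Sum>i. F (A i)) = (\<Sum>k\<in>{1..6}. \<Sum>i. ennreal (wt p s t k) * emeasure (distr \<mu> ?R (tau b k)) (A i))"
      unfolding F_def by (rule suminf_sum) simp
    also have "\<dots> = (\<Sum>k\<in>{1..6}. ennreal (wt p s t k) * emeasure (distr \<mu> ?R (tau b k)) (\<Union>i. A i))"
    proof (rule sum.cong[OF refl])
      fix k
      have "(\<Sum>i. emeasure (distr \<mu> ?R (tau b k)) (A i)) = emeasure (distr \<mu> ?R (tau b k)) (\<Union>i. A i)"
        using A by (intro suminf_emeasure) auto
      then show "(\<Sum>i. ennreal (wt p s t k) * emeasure (distr \<mu> ?R (tau b k)) (A i)) =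
          ennreal (wt p s t k) * emeasure (distr \<mu> ?R (tau b k)) (\<Union>i. A i)"
        by simp
    qed
    finally show "(\<Sum>i. F (A i)) = F (\<Union>i. A i)" unfolding F_def .
  qed
  have "emeasure (nu b p s t \<mu>) C = F C"
    unfolding nuF using sa pos ca C by (rule emeasure_measure_of_sigma)
  also have "\<dots> = (\<Sum>k\<in>{1..6}. ennreal (wt p s t k) * (\<integral>\<^sup>+z. indicator C (tau b k z) \<partial>\<mu>))"
    unfolding F_def using C by (simp add: dk)
  also have "\<dots> = (\<Sum>k\<in>{1..6}. (\<integral>\<^sup>+z. ennreal (wt p s t k) * indicator C (tau b k z) \<partial>\<mu>))"
    using C by (intro sum.cong refl nn_integral_cmult[symmetric]) measurable
  also have "\<dots> = (\<integral>\<^sup>+z. (\<Sum>k\<in>{1..6}. ennreal (wt p s t k) * indicator C (tau b k z)) \<partial>\<mu>)"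
    using C by (intro nn_integral_sum[symmetric]) measurable
  also have "\<dots> = (\<integral>\<^sup>+z. ennreal (\<Sum>k\<in>{1..6}. wt p s t k * indicator C (tau b k z)) \<partial>\<mu>)"
    using wt by (intro nn_integral_cong) (simp add: ennreal_mult ennreal_indicator flip: sum_ennreal)
  finally show ?thesis .
qed

lemma GR:
  assumes p: "0 \<le> p" "p \<le> 1" and st: "0 \<le> s" "0 \<le> t" "s + t \<le> 1"
    and a: "a \<in> sets (m1 p)" and B: "B \<in> sets (m2 s t)"
  shows "(\<integral>\<^sup>+\<omega>. \<integral>\<^sup>+\<upsilon>. indicator (a \<times> (B \<times> C)) (Rmap b (\<omega>, \<upsilon>, z)) \<partial>m2 s t \<partial>m1 p)
    = ennreal (\<Sum>k\<in>{1..6}. wt p s t k * indicator C (tau b k z)) * emeasure (m1 p) a * emeasure (m2 s t) B"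
proof -
  have e: "Rmap b (\<omega>, \<upsilon>, z) = (shift \<omega>, shift \<upsilon>, tau b (3 * \<omega> 0 + \<upsilon> 0 + 1) z)" for \<omega> \<upsilon>
    by (simp add: Rmap_def)
  have w: "(\<Sum>k\<in>{1..6}. wt p s t k * indicator C (tau b k z)) =
    p * (s * indicator C (tau b 1 z) + t * indicator C (tau b 2 z) + (1-s-t) * indicator C (tau b 3 z))
    + (1-p) * (s * indicator C (tau b 4 z) + t * indicator C (tau b 5 z) + (1-s-t) * indicator C (tau b 6 z))"
    unfolding sum6 by (simp add: wt_def algebra_simps)
  note c = caseR[OF p st a B, where C=C and F="\<lambda>i j. tau b (3 * i + j + 1) z"]
  have ar: "(3*0+0+1::nat) = 1" "(3*0+1+1::nat) = 2" "(3*0+2+1::nat) = 3"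
    "(3*1+0+1::nat) = 4" "(3*1+1+1::nat) = 5" "(3*1+2+1::nat) = 6" by simp_all
  show ?thesis unfolding e w by (rule c[unfolded ar])
qed

lemma GK:
  assumes b: "1 < b" "b < 3/2" and z: "z \<in> Sb b"
    and p: "0 \<le> p" "p \<le> 1" and st: "0 \<le> s" "0 \<le> t" "s + t \<le> 1"
    and a: "a \<in> sets (m1 p)" and B: "B \<in> sets (m2 s t)"
  shows "(\<integral>\<^sup>+\<omega>. \<integral>\<^sup>+\<upsilon>. indicator (a \<times> (B \<times> C)) (Kmap b (\<omega>, \<upsilon>, z)) \<partial>m2 s t \<partial>m1 p)
    = ennreal (\<Sum>k\<in>{1..6}. wt p s t k * indicator C (tau b k z)) * emeasure (m1 p) a * emeasure (m2 s t) B"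
proof -
  from chain_cases[OF b(1) z] show ?thesis
  proof cases
    case 1
    have e: "Kmap b (\<omega>, \<upsilon>, z) = (\<omega>, \<upsilon>, b *\<^sub>R z - qv 0)" for \<omega> \<upsilon> using 1 by (simp add: Kmap_def)
    have w: "(\<Sum>k\<in>{1..6}. wt p s t k * indicator C (tau b k z)) = indicator C (b *\<^sub>R z - qv 0)"
      unfolding sum6 using 1 by (simp add: wt_def tau_def adig_def algebra_simps)
    show ?thesis unfolding e w by (rule caseE[OF a B])
  next
    case 2
    have e: "Kmap b (\<omega>, \<upsilon>, z) = (\<omega>, \<upsilon>, b *\<^sub>R z - qv 1)" for \<omega> \<upsilon> using 2 by (simp add: Kmap_def)
    have w: "(\<Sum>k\<in>{1..6}. wt p s t k * indicator C (tau b k z)) = indicator C (b *\<^sub>R z - qv 1)"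
      unfolding sum6 using 2 by (simp add: wt_def tau_def adig_def algebra_simps)
    show ?thesis unfolding e w by (rule caseE[OF a B])
  next
    case 3
    have e: "Kmap b (\<omega>, \<upsilon>, z) = (\<omega>, \<upsilon>, b *\<^sub>R z - qv 2)" for \<omega> \<upsilon> using 3 by (simp add: Kmap_def)
    have w: "(\<Sum>k\<in>{1..6}. wt p s t k * indicator C (tau b k z)) = indicator C (b *\<^sub>R z - qv 2)"
      unfolding sum6 using 3 by (simp add: wt_def tau_def adig_def algebra_simps)
    show ?thesis unfolding e w by (rule caseE[OF a B])
  next
    case 4
    have e: "Kmap b (\<omega>, \<upsilon>, z) = (shift \<omega>, \<upsilon>, b *\<^sub>R z - (if \<omega> 0 = 0 then qv 0 else qv 1))" for \<omega> \<upsilon>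
      using 4 by (simp add: Kmap_def)
    have w: "(\<Sum>k\<in>{1..6}. wt p s t k * indicator C (tau b k z)) =
        p * indicator C (b *\<^sub>R z - qv 0) + (1-p) * indicator C (b *\<^sub>R z - qv 1)"
      unfolding sum6 using 4 by (simp add: wt_def tau_def adig_def algebra_simps)
    show ?thesis unfolding e w
      using caseC[OF p a B, where C=C and G="\<lambda>i. b *\<^sub>R z - (if i = 0 then qv 0 else qv 1)"] by simp
  next
    case 5
    have e: "Kmap b (\<omega>, \<upsilon>, z) = (shift \<omega>, \<upsilon>, b *\<^sub>R z - (if \<omega> 0 = 0 then qv 1 else qv 2))" for \<omega> \<upsilon>
      using 5 by (simp add: Kmap_def)
    have w: "(\<Sum>k\<in>{1..6}. wt p s t k * indicator C (tau b k z)) =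
        p * indicator C (b *\<^sub>R z - qv 1) + (1-p) * indicator C (b *\<^sub>R z - qv 2)"
      unfolding sum6 using 5 by (simp add: wt_def tau_def adig_def algebra_simps)
    show ?thesis unfolding e w
      using caseC[OF p a B, where C=C and G="\<lambda>i. b *\<^sub>R z - (if i = 0 then qv 1 else qv 2)"] by simp
  next
    case 6
    have e: "Kmap b (\<omega>, \<upsilon>, z) = (shift \<omega>, \<upsilon>, b *\<^sub>R z - (if \<omega> 0 = 0 then qv 0 else qv 2))" for \<omega> \<upsilon>
      using 6 by (simp add: Kmap_def)
    have w: "(\<Sum>k\<in>{1..6}. wt p s t k * indicator C (tau b k z)) =
        p * indicator C (b *\<^sub>R z - qv 0) + (1-p) * indicator C (b *\<^sub>R z - qv 2)"
      unfolding sum6 using 6 by (simp add: wt_def tau_def adig_def algebra_simps)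
    show ?thesis unfolding e w
      using caseC[OF p a B, where C=C and G="\<lambda>i. b *\<^sub>R z - (if i = 0 then qv 0 else qv 2)"] by simp
  next
    case 7
    have e: "Kmap b (\<omega>, \<upsilon>, z) = (\<omega>, shift \<upsilon>, b *\<^sub>R z - qv (\<upsilon> 0))" for \<omega> \<upsilon>
      using 7 by (simp add: Kmap_def)
    have w: "(\<Sum>k\<in>{1..6}. wt p s t k * indicator C (tau b k z)) =
        s * indicator C (b *\<^sub>R z - qv 0) + t * indicator C (b *\<^sub>R z - qv 1) + (1-s-t) * indicator C (b *\<^sub>R z - qv 2)"
      unfolding sum6 using 7 by (simp add: wt_def tau_def adig_def algebra_simps)
    show ?thesis unfolding e w
      using case3[OF st a B, where C=C and G="\<lambda>j. b *\<^sub>R z - qv j"] by simp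
  qed
qed



lemma wt_nonneg: "0 \<le> p \<Longrightarrow> p \<le> 1 \<Longrightarrow> 0 \<le> s \<Longrightarrow> 0 \<le> t \<Longrightarrow> s + t \<le> 1 \<Longrightarrow> 0 \<le> wt p s t k"
  by (auto simp: wt_def)

lemma sets_nu: "sets (nu b p s t \<mu>) = sets (restrict_space borel (Sb b))"
proof -
  have "sets (restrict_space borel (Sb b)) \<subseteq> Pow (Sb b)"
    using sets.space_closed[of "restrict_space borel (Sb b)"] by (auto simp: space_rb)
  then show ?thesis
    unfolding nu_def using sets.sigma_sets_eq[of "restrict_space borel (Sb b)"]
    by (simp add: sets_measure_of_conv space_rb)
qed

lemma W_meas:
  assumes s\<mu>: "sets \<mu> = sets (restrict_space borel (Sb b))" and b: "1 < b" "b < 3/2"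
    and C: "C \<in> sets (restrict_space borel (Sb b))"
  shows "(\<lambda>z. ennreal (\<Sum>k\<in>{1..6}. wt p s t k * indicator C (tau b k z))) \<in> borel_measurable \<mu>"
proof -
  have [measurable]: "tau b k \<in> measurable \<mu> (restrict_space borel (Sb b))" for k
    unfolding measurable_cong_sets[OF s\<mu> refl]
    by (rule measurable_restrict_space2) (auto simp: space_rb intro: tau_in[OF b] measurable_restrict_space1)
  have [measurable]: "C \<in> sets (restrict_space borel (Sb b))" using C .
  show ?thesis by measurable
qed

lemma prob_nu:
  assumes b: "1 < b" "b < 3/2" and s\<mu>: "sets \<mu> = sets (restrict_space borel (Sb b))"
    and P: "prob_space \<mu>" and p: "0 \<le> p" "p \<le> 1" and st: "0 \<le> s" "0 \<le> t" "s + t \<le> 1"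
  shows "prob_space (nu b p s t \<mu>)"
proof
  interpret prob_space \<mu> by fact
  have sp: "space (nu b p s t \<mu>) = Sb b"
    using sets_eq_imp_space_eq[OF sets_nu[of b p s t \<mu>]] by (simp add: space_rb)
  have Sb: "Sb b \<in> sets (restrict_space borel (Sb b))"
    using sets.top[of "restrict_space borel (Sb b)"] by (simp add: space_rb)
  have "emeasure (nu b p s t \<mu>) (Sb b) = (\<integral>\<^sup>+z. ennreal (\<Sum>k\<in>{1..6}. wt p s t k * indicator (Sb b) (tau b k z)) \<partial>\<mu>)"
    by (rule nu_emeasure[OF b s\<mu> wt_nonneg[OF p st] Sb])
  also have "\<dots> = (\<integral>\<^sup>+z. 1 \<partial>\<mu>)"
  proof (rule nn_integral_cong)
    fix z assume "z \<in> space \<mu>"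
    then have z: "z \<in> Sb b" using space_mu[OF s\<mu>] by simp
    have "(\<Sum>k\<in>{1..6}. wt p s t k * indicator (Sb b) (tau b k z)) = (\<Sum>k\<in>{1..6::nat}. wt p s t k)"
      using tau_in[OF b z] by simp
    also have "\<dots> = 1" unfolding sum6 by (simp add: wt_def algebra_simps)
    finally show "ennreal (\<Sum>k\<in>{1..6}. wt p s t k * indicator (Sb b) (tau b k z)) = 1" by simp
  qed
  also have "\<dots> = 1" using emeasure_space_1 by simp
  finally show "emeasure (nu b p s t \<mu>) (space (nu b p s t \<mu>)) = 1" unfolding sp .
qed

lemma rect:
  assumes b: "1 < b" "b < 3/2" and s\<mu>: "sets \<mu> = sets (restrict_space borel (Sb b))"
    and P: "prob_space \<mu>" and p: "0 \<le> p" "p \<le> 1" and st: "0 \<le> s" "0 \<le> t" "s + t \<le> 1"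
    and \<Phi>: "\<Phi> \<in> measurable (m1 p \<Otimes>\<^sub>M (m2 s t \<Otimes>\<^sub>M \<mu>)) (m1 p \<Otimes>\<^sub>M (m2 s t \<Otimes>\<^sub>M \<mu>))"
    and G: "\<And>z a B C. z \<in> Sb b \<Longrightarrow> a \<in> sets (m1 p) \<Longrightarrow> B \<in> sets (m2 s t) \<Longrightarrow>
      (\<integral>\<^sup>+\<omega>. \<integral>\<^sup>+\<upsilon>. indicator (a \<times> (B \<times> C)) (\<Phi> (\<omega>, \<upsilon>, z)) \<partial>m2 s t \<partial>m1 p)
       = ennreal (\<Sum>k\<in>{1..6}. wt p s t k * indicator C (tau b k z)) * emeasure (m1 p) a * emeasure (m2 s t) B"
    and a: "a \<in> sets (m1 p)" and B: "B \<in> sets (m2 s t)" and C: "C \<in> sets (restrict_space borel (Sb b))"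
  shows "emeasure (distr (m1 p \<Otimes>\<^sub>M (m2 s t \<Otimes>\<^sub>M \<mu>)) (m1 p \<Otimes>\<^sub>M (m2 s t \<Otimes>\<^sub>M \<mu>)) \<Phi>) (a \<times> (B \<times> C))
    = emeasure (m1 p) a * (emeasure (m2 s t) B * emeasure (nu b p s t \<mu>) C)"
proof -
  let ?M = "m1 p \<Otimes>\<^sub>M (m2 s t \<Otimes>\<^sub>M \<mu>)"
  let ?W = "\<lambda>z. ennreal (\<Sum>k\<in>{1..6}. wt p s t k * indicator C (tau b k z))"
  interpret Pm: prob_space \<mu> by fact
  have s1: "sigma_finite_measure (m1 p)"
    using prob_m1[OF p] by (simp add: prob_space_imp_sigma_finite)
  have s2: "sigma_finite_measure (m2 s t)"
    using prob_m2[OF st] by (simp add: prob_space_imp_sigma_finite)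
  have s3: "sigma_finite_measure \<mu>" using P by (simp add: prob_space_imp_sigma_finite)
  have Cm: "C \<in> sets \<mu>" using C s\<mu> by simp
  have X: "a \<times> (B \<times> C) \<in> sets ?M" using a B Cm by auto
  have f: "(\<lambda>x. indicator (a \<times> (B \<times> C)) (\<Phi> x) :: ennreal) \<in> borel_measurable ?M"
    using X \<Phi> by measurable
  have "emeasure (distr ?M ?M \<Phi>) (a \<times> (B \<times> C)) = (\<integral>\<^sup>+x. indicator (a \<times> (B \<times> C)) x \<partial>distr ?M ?M \<Phi>)"
    using X by simp
  also have "\<dots> = (\<integral>\<^sup>+x. indicator (a \<times> (B \<times> C)) (\<Phi> x) \<partial>?M)"
    using X \<Phi> by (subst nn_integral_distr) auto
  also have "\<dots> = (\<integral>\<^sup>+z. \<integral>\<^sup>+\<omega>. \<integral>\<^sup>+\<upsilon>. indicator (a \<times> (B \<times> C)) (\<Phi> (\<omega>, \<upsilon>, z)) \<partial>m2 s t \<partial>m1 p \<partial>\<mu>)"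
    by (rule tri_swap[OF s1 s2 s3 f])
  also have "\<dots> = (\<integral>\<^sup>+z. ?W z * (emeasure (m1 p) a * emeasure (m2 s t) B) \<partial>\<mu>)"
  proof (rule nn_integral_cong)
    fix z assume "z \<in> space \<mu>"
    then have z: "z \<in> Sb b" using space_mu[OF s\<mu>] by simp
    show "(\<integral>\<^sup>+\<omega>. \<integral>\<^sup>+\<upsilon>. indicator (a \<times> (B \<times> C)) (\<Phi> (\<omega>, \<upsilon>, z)) \<partial>m2 s t \<partial>m1 p) = ?W z * (emeasure (m1 p) a * emeasure (m2 s t) B)"
      using G[OF z a B, of C] by (simp add: ac_simps)
  qed
  also have "\<dots> = (\<integral>\<^sup>+z. ?W z \<partial>\<mu>) * (emeasure (m1 p) a * emeasure (m2 s t) B)"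
    by (rule nn_integral_multc) (rule W_meas[OF s\<mu> b C])
  also have "(\<integral>\<^sup>+z. ?W z \<partial>\<mu>) = emeasure (nu b p s t \<mu>) C"
    by (rule nu_emeasure[OF b s\<mu> wt_nonneg[OF p st] C, symmetric])
  finally show ?thesis by (simp add: ac_simps)
qed

lemma main_eq:
  assumes b: "1 < b" "b < 3/2" and s\<mu>: "sets \<mu> = sets (restrict_space borel (Sb b))"
    and P: "prob_space \<mu>" and p: "0 \<le> p" "p \<le> 1" and st: "0 \<le> s" "0 \<le> t" "s + t \<le> 1"
    and \<Phi>: "\<Phi> \<in> measurable (m1 p \<Otimes>\<^sub>M (m2 s t \<Otimes>\<^sub>M \<mu>)) (m1 p \<Otimes>\<^sub>M (m2 s t \<Otimes>\<^sub>M \<mu>))"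
    and G: "\<And>z a B C. z \<in> Sb b \<Longrightarrow> a \<in> sets (m1 p) \<Longrightarrow> B \<in> sets (m2 s t) \<Longrightarrow>
      (\<integral>\<^sup>+\<omega>. \<integral>\<^sup>+\<upsilon>. indicator (a \<times> (B \<times> C)) (\<Phi> (\<omega>, \<upsilon>, z)) \<partial>m2 s t \<partial>m1 p)
       = ennreal (\<Sum>k\<in>{1..6}. wt p s t k * indicator C (tau b k z)) * emeasure (m1 p) a * emeasure (m2 s t) B"
  shows "distr (m1 p \<Otimes>\<^sub>M (m2 s t \<Otimes>\<^sub>M \<mu>)) (m1 p \<Otimes>\<^sub>M (m2 s t \<Otimes>\<^sub>M \<mu>)) \<Phi>
    = m1 p \<Otimes>\<^sub>M (m2 s t \<Otimes>\<^sub>M nu b p s t \<mu>)"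
proof -
  let ?M = "m1 p \<Otimes>\<^sub>M (m2 s t \<Otimes>\<^sub>M \<mu>)"
  let ?N = "m1 p \<Otimes>\<^sub>M (m2 s t \<Otimes>\<^sub>M nu b p s t \<mu>)"
  let ?D = "distr ?M ?M \<Phi>"
  let ?R = "restrict_space borel (Sb b)"
  define Gs where "Gs = {a \<times> (B \<times> C) | a B C. a \<in> sets (m1 p) \<and> B \<in> sets (m2 s t) \<and> C \<in> sets ?R}"
  define E2 where "E2 = {B \<times> C | B C. B \<in> sets (m2 s t) \<and> C \<in> sets ?R}"
  define \<Omega> where "\<Omega> = space (m1 p) \<times> (space (m2 s t) \<times> Sb b)"
  have snu: "sets (nu b p s t \<mu>) = sets ?R" by (rule sets_nu)
  have spnu: "space (nu b p s t \<mu>) = Sb b"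
    using sets_eq_imp_space_eq[OF snu] by (simp add: space_rb)
  have SbR: "Sb b \<in> sets ?R"
    using sets.top[of ?R] by (simp add: space_rb)
  have pnu: "prob_space (nu b p s t \<mu>)" by (rule prob_nu[OF b s\<mu> P p st])
  have sf2: "sigma_finite_measure (m2 s t \<Otimes>\<^sub>M nu b p s t \<mu>)"
    using prob_m2[OF st] pnu
    by (intro sigma_finite_pair_measure prob_space_imp_sigma_finite)
  have E2sub: "E2 \<subseteq> Pow (space (m2 s t \<Otimes>\<^sub>M nu b p s t \<mu>))"
    unfolding E2_def space_pair_measure spnu
    using sets.sets_into_space[of _ "m2 s t"] sets.sets_into_space[of _ ?R] by (fastforce simp: space_rb)
  have sE2: "sets (m2 s t \<Otimes>\<^sub>M nu b p s t \<mu>) = sigma_sets (space (m2 s t \<Otimes>\<^sub>M nu b p s t \<mu>)) E2"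
    unfolding sets_pair_measure E2_def snu space_pair_measure by simp
  have "sets ?N = sets (sigma (space (m1 p) \<times> space (m2 s t \<Otimes>\<^sub>M nu b p s t \<mu>))
        {a \<times> x | a x. a \<in> sets (m1 p) \<and> x \<in> E2})"
  proof (rule sets_pair_eq)
    show "sets (m1 p) \<subseteq> Pow (space (m1 p))" by (rule sets.space_closed)
    show "sets (m1 p) = sigma_sets (space (m1 p)) (sets (m1 p))" by (simp add: sets.sigma_sets_eq)
    show "countable {space (m1 p)}" "{space (m1 p)} \<subseteq> sets (m1 p)" "\<Union>{space (m1 p)} = space (m1 p)" by auto
    show "E2 \<subseteq> Pow (space (m2 s t \<Otimes>\<^sub>M nu b p s t \<mu>))" by (rule E2sub)
    show "sets (m2 s t \<Otimes>\<^sub>M nu b p s t \<mu>) = sigma_sets (space (m2 s t \<Otimes>\<^sub>M nu b p s t \<mu>)) E2" by (rule sE2)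
    show "countable {space (m2 s t) \<times> Sb b}" by simp
    show "{space (m2 s t) \<times> Sb b} \<subseteq> E2" unfolding E2_def using SbR by auto
    show "\<Union>{space (m2 s t) \<times> Sb b} = space (m2 s t \<Otimes>\<^sub>M nu b p s t \<mu>)" by (simp add: space_pair_measure spnu)
  qed
  also have "{a \<times> x | a x. a \<in> sets (m1 p) \<and> x \<in> E2} = Gs" unfolding E2_def Gs_def by blast
  also have "space (m1 p) \<times> space (m2 s t \<Otimes>\<^sub>M nu b p s t \<mu>) = \<Omega>"
    by (simp add: \<Omega>_def space_pair_measure spnu)
  finally have sN0: "sets ?N = sets (sigma \<Omega> Gs)" .
  have Gsub: "Gs \<subseteq> Pow \<Omega>"
    unfolding Gs_def \<Omega>_def
    using sets.sets_into_space[of _ "m1 p"] sets.sets_into_space[of _ "m2 s t"] sets.sets_into_space[of _ ?R]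
    by (fastforce simp: space_rb)
  have sN: "sets ?N = sigma_sets \<Omega> Gs" using sN0 Gsub by simp
  have sD: "sets ?D = sigma_sets \<Omega> Gs"
  proof -
    have "sets ?D = sets ?M" by simp
    also have "\<dots> = sets ?N"
      by (intro sets_pair_measure_cong refl) (simp add: s\<mu> snu)
    finally show ?thesis using sN by simp
  qed
  have pM: "prob_space ?M"
    using prob_m1[OF p] prob_m2[OF st] P by (intro prob_space_pair)
  have pD: "prob_space ?D" by (rule prob_space.prob_space_distr[OF pM \<Phi>])
  show ?thesis
  proof (rule measure_eqI_generator_eq[where E=Gs and \<Omega>=\<Omega> and A="\<lambda>_. \<Omega>"])
    show "Int_stable Gs"
    proof (rule Int_stableI)
      fix X Y assume "X \<in> Gs" "Y \<in> Gs"
      then obtain a B C a' B' C' where X: "X = a \<times> (B \<times> C)" "a \<in> sets (m1 p)" "B \<in> sets (m2 s t)" "C \<in> sets ?R"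
        and Y: "Y = a' \<times> (B' \<times> C')" "a' \<in> sets (m1 p)" "B' \<in> sets (m2 s t)" "C' \<in> sets ?R"
        unfolding Gs_def by blast
      have "X \<inter> Y = (a \<inter> a') \<times> ((B \<inter> B') \<times> (C \<inter> C'))" unfolding X Y by auto
      then show "X \<inter> Y \<in> Gs" unfolding Gs_def using X Y by blast
    qed
    show "Gs \<subseteq> Pow \<Omega>" by (rule Gsub)
    show "sets ?D = sigma_sets \<Omega> Gs" by (rule sD)
    show "sets ?N = sigma_sets \<Omega> Gs" by (rule sN)
    show "range (\<lambda>_. \<Omega>) \<subseteq> Gs" unfolding Gs_def \<Omega>_def using SbR by blast
    show "(\<Union>i::nat. \<Omega>) = \<Omega>" by simp
    show "emeasure ?D \<Omega> \<noteq> \<infinity>" for i :: nat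
      using pD by (simp add: prob_space_def finite_measure.emeasure_finite)
    fix X assume "X \<in> Gs"
    then obtain a B C where X: "X = a \<times> (B \<times> C)" and a: "a \<in> sets (m1 p)" and B: "B \<in> sets (m2 s t)"
      and C: "C \<in> sets ?R" unfolding Gs_def by blast
    have "emeasure ?D X = emeasure (m1 p) a * (emeasure (m2 s t) B * emeasure (nu b p s t \<mu>) C)"
      unfolding X by (rule rect[OF b s\<mu> P p st \<Phi> G a B C])
    also have "\<dots> = emeasure ?N X"
    proof -
      have "emeasure ?N X = emeasure (m1 p) a * emeasure (m2 s t \<Otimes>\<^sub>M nu b p s t \<mu>) (B \<times> C)"
        unfolding X using a B C snu by (intro sigma_finite_measure.emeasure_pair_measure_Times[OF sf2]) auto
      also have "emeasure (m2 s t \<Otimes>\<^sub>M nu b p s t \<mu>) (B \<times> C) = emeasure (m2 s t) B * emeasure (nu b p s t \<mu>) C"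
        using B C snu pnu by (intro sigma_finite_measure.emeasure_pair_measure_Times prob_space_imp_sigma_finite) auto
      finally show ?thesis by simp
    qed
    finally show "emeasure ?D X = emeasure ?N X" .
  qed
qed


theorem lemma5p6:
  fixes \<beta> p s t :: real and \<mu> :: "(real \<times> real) measure"
  assumes "1 < \<beta>" "\<beta> < 3/2"
    and "0 < p" "p < 1" "0 < s" "0 < t" "s + t < 1"
    and "prob_space \<mu>" "sets \<mu> = sets (restrict_space borel (Sb \<beta>))"
  shows "distr (m1 p \<Otimes>\<^sub>M (m2 s t \<Otimes>\<^sub>M \<mu>)) (m1 p \<Otimes>\<^sub>M (m2 s t \<Otimes>\<^sub>M \<mu>)) (Kmap \<beta>)
           = m1 p \<Otimes>\<^sub>M (m2 s t \<Otimes>\<^sub>M nu \<beta> p s t \<mu>)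
       \<and> distr (m1 p \<Otimes>\<^sub>M (m2 s t \<Otimes>\<^sub>M \<mu>)) (m1 p \<Otimes>\<^sub>M (m2 s t \<Otimes>\<^sub>M \<mu>)) (Rmap \<beta>)
           = m1 p \<Otimes>\<^sub>M (m2 s t \<Otimes>\<^sub>M nu \<beta> p s t \<mu>)"
proof -
  have b: "1 < \<beta>" "\<beta> < 3/2" using assms by auto
  have p: "0 \<le> p" "p \<le> 1" using assms by auto
  have st: "0 \<le> s" "0 \<le> t" "s + t \<le> 1" using assms by auto
  have P: "prob_space \<mu>" and s\<mu>: "sets \<mu> = sets (restrict_space borel (Sb \<beta>))" using assms by auto
  show ?thesis
  proof
    show "distr (m1 p \<Otimes>\<^sub>M (m2 s t \<Otimes>\<^sub>M \<mu>)) (m1 p \<Otimes>\<^sub>M (m2 s t \<Otimes>\<^sub>M \<mu>)) (Kmap \<beta>)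
           = m1 p \<Otimes>\<^sub>M (m2 s t \<Otimes>\<^sub>M nu \<beta> p s t \<mu>)"
      by (rule main_eq[OF b s\<mu> P p st K_meas[OF b s\<mu>]]) (rule GK[OF b _ p st], assumption+)
    show "distr (m1 p \<Otimes>\<^sub>M (m2 s t \<Otimes>\<^sub>M \<mu>)) (m1 p \<Otimes>\<^sub>M (m2 s t \<Otimes>\<^sub>M \<mu>)) (Rmap \<beta>)
           = m1 p \<Otimes>\<^sub>M (m2 s t \<Otimes>\<^sub>M nu \<beta> p s t \<mu>)"
      by (rule main_eq[OF b s\<mu> P p st R_meas[OF b s\<mu>]]) (rule GR[OF p st], assumption+)
  qed
qed

end
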